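(* Let $k$ be an algebraically closed field of characteristic $p\ge0$, $n\ge1$, and let $\pi : \mathrm{GL}(n,k)\to\mathrm{PGL}(n,k)$ be the natural surjection. Let $\theta_i : \mathbb{G}_a\to\mathrm{PGL}(n,k)$ $(i=1,2)$ be homomorphisms of algebraic groups and $\varphi_i : \mathbb{G}_a\to\mathrm{GL}(n,k)$ $(i=1,2)$ homomorphisms of algebraic groups with $\theta_i = \pi\circ\varphi_i$. Then the following are equivalent: (1) $\theta_1$ and $\theta_2$ are equivalent, i.e. there exists $P\in\mathrm{GL}(n,k)$ with $\theta_2(t) = [P]\,\theta_1(t)\,[P]^{-1}$ for all $t\in\mathbb{G}_a$; (2) $\varphi_1$ and $\varphi_2$ are equivalent, i.e. there exists $Q\in\mathrm{GL}(n,k)$ with $\varphi_2(t) = Q\,\varphi_1(t)\,Q^{-1}$ for all $t\in\mathbb{G}_a$.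
   Context: $\mathbb{G}_a$ denotes the additive group of $k$; $[P] = \pi(P)$ denotes the class of $P$ in $\mathrm{PGL}(n,k)$. *)

theory Defs
  imports "HOL-Analysis.Analysis" "HOL-Computational_Algebra.Polynomial"
begin

text \<open>Homomorphism of algebraic groups from the additive group G_a of k to GL(n,k):
  a group homomorphism (for addition in k, matrix product in GL) whose matrix
  entries are regular functions on the affine line, i.e. polynomials in t.\<close>
definition Ga_hom_GL :: "('k::field \<Rightarrow> 'k^'n^'n) \<Rightarrow> bool" where
  "Ga_hom_GL \<phi> \<longleftrightarrow>
     (\<exists>F :: 'n \<Rightarrow> 'n \<Rightarrow> 'k poly. \<forall>t i j. \<phi> t $ i $ j = poly (F i j) t)
     \<and> (\<forall>t. invertible (\<phi> t))
     \<and> (\<forall>s t. \<phi> (s + t) = \<phi> s ** \<phi> t)"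

text \<open>PGL(n,k) = GL(n,k) modulo nonzero scalars; an element of PGL is represented
  by its class, the set of nonzero scalar multiples of an invertible matrix.
  pgl_proj is the natural surjection pi.\<close>
definition pgl_proj :: "'k::field^'n^'n \<Rightarrow> ('k^'n^'n) set" where
  "pgl_proj A = {(\<chi> i j. c * A $ i $ j) | c. c \<noteq> 0}"

definition pgl_mult :: "('k::field^'n^'n) set \<Rightarrow> ('k^'n^'n) set \<Rightarrow> ('k^'n^'n) set" where
  "pgl_mult X Y = {A ** B | A B. A \<in> X \<and> B \<in> Y}"

definition pgl_inv :: "('k::field^'n^'n) set \<Rightarrow> ('k^'n^'n) set" where
  "pgl_inv X = matrix_inv ` X"

end

theory Submission
  imports Defs
begin

definition sc :: "'k::field \<Rightarrow> 'k^'n^'n \<Rightarrow> 'k^'n^'n" where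
  "sc c A = (\<chi> i j. c * A$i$j)"

lemma sc_mult_left: "sc c A ** B = sc c (A ** B)"
  by (simp add: sc_def matrix_matrix_mult_def vec_eq_iff sum_distrib_left mult.assoc)

lemma sc_mult_right: "A ** sc c B = sc c (A ** B)"
  by (simp add: sc_def matrix_matrix_mult_def vec_eq_iff sum_distrib_left mult.left_commute)

lemma sc_sc: "sc c (sc d A) = sc (c*d) A"
  by (simp add: sc_def vec_eq_iff mult.assoc)

lemma sc_1: "sc 1 A = A"
  by (simp add: sc_def vec_eq_iff)

lemma minv:
  fixes A :: "'k::field^'n^'n"
  assumes "invertible A"
  shows "A ** matrix_inv A = mat 1 \<and> matrix_inv A ** A = mat 1"
  using assms unfolding invertible_def matrix_inv_def by (rule someI_ex)

lemma minv_unique: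
  fixes A B :: "'k::field^'n^'n"
  assumes "A ** B = mat 1" "B ** A = mat 1"
  shows "matrix_inv A = B"
proof -
  have inv: "invertible A" using assms unfolding invertible_def by blast
  have "B = B ** (A ** matrix_inv A)" using minv[OF inv] by simp
  also have "\<dots> = (B ** A) ** matrix_inv A" by (simp add: matrix_mul_assoc)
  also have "\<dots> = matrix_inv A" using assms by simp
  finally show ?thesis by simp
qed

lemma minv_sc:
  fixes A :: "'k::field^'n^'n"
  assumes "invertible A" "c \<noteq> 0"
  shows "matrix_inv (sc c A) = sc (inverse c) (matrix_inv A)"
  apply (rule minv_unique)
  using minv[OF assms(1)] assms(2)
  by (simp_all add: sc_mult_left sc_mult_right sc_sc sc_1)

lemma det_sc: "det (sc c (A::'k::field^'n^'n)) = c ^ CARD('n) * det A"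
  by (simp add: det_def sc_def prod.distrib sum_distrib_left mult.left_commute)

lemma pgl_proj_sc: "pgl_proj A = {sc c A | c. c \<noteq> 0}"
  by (simp add: pgl_proj_def sc_def)

lemma mem_pgl_proj: "B \<in> pgl_proj A \<longleftrightarrow> (\<exists>c. c \<noteq> 0 \<and> B = sc c A)"
  unfolding pgl_proj_sc by blast

lemma sc_in: "c \<noteq> 0 \<Longrightarrow> sc c A \<in> pgl_proj A"
  unfolding mem_pgl_proj by (rule exI[of _ c]) simp

lemma pgl_mult_proj: "pgl_mult (pgl_proj X) (pgl_proj Y) = pgl_proj (X ** Y)"
proof (rule set_eqI)
  fix C
  show "C \<in> pgl_mult (pgl_proj X) (pgl_proj Y) \<longleftrightarrow> C \<in> pgl_proj (X ** Y)"
  proof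
    assume "C \<in> pgl_mult (pgl_proj X) (pgl_proj Y)"
    then obtain A B where AB: "C = A ** B" "A \<in> pgl_proj X" "B \<in> pgl_proj Y"
      unfolding pgl_mult_def by blast
    then obtain a b where ab: "a \<noteq> 0" "b \<noteq> 0" "A = sc a X" "B = sc b Y"
      unfolding mem_pgl_proj by blast
    have "C = sc (a*b) (X ** Y)" using AB(1) ab(3,4)
      by (simp add: sc_mult_left sc_mult_right sc_sc mult.commute)
    then show "C \<in> pgl_proj (X ** Y)" unfolding mem_pgl_proj using ab(1,2) by (intro exI[of _ "a*b"]) simp
  next
    assume "C \<in> pgl_proj (X ** Y)"
    then obtain c where c: "c \<noteq> 0" "C = sc c (X ** Y)" unfolding mem_pgl_proj by blast
    have "sc c X \<in> pgl_proj X" "sc 1 Y \<in> pgl_proj Y" using c(1) by (simp_all add: sc_in)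
    moreover have "C = sc c X ** sc 1 Y" using c(2) by (simp add: sc_mult_left sc_mult_right sc_1)
    ultimately show "C \<in> pgl_mult (pgl_proj X) (pgl_proj Y)" unfolding pgl_mult_def by blast
  qed
qed

lemma pgl_inv_proj:
  fixes P :: "'k::field^'n^'n"
  assumes "invertible P"
  shows "pgl_inv (pgl_proj P) = pgl_proj (matrix_inv P)"
proof (rule set_eqI)
  fix C
  show "C \<in> pgl_inv (pgl_proj P) \<longleftrightarrow> C \<in> pgl_proj (matrix_inv P)"
  proof
    assume "C \<in> pgl_inv (pgl_proj P)"
    then obtain A where A: "C = matrix_inv A" "A \<in> pgl_proj P" unfolding pgl_inv_def by blast
    then obtain a where a: "a \<noteq> 0" "A = sc a P" unfolding mem_pgl_proj by blast
    have "C = sc (inverse a) (matrix_inv P)" using A(1) a minv_sc[OF assms a(1)] by simp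
    then show "C \<in> pgl_proj (matrix_inv P)" unfolding mem_pgl_proj using a(1) by (intro exI[of _ "inverse a"]) simp
  next
    assume "C \<in> pgl_proj (matrix_inv P)"
    then obtain c where c: "c \<noteq> 0" "C = sc c (matrix_inv P)" unfolding mem_pgl_proj by blast
    have "C = matrix_inv (sc (inverse c) P)"
      using c minv_sc[OF assms, of "inverse c"] by simp
    moreover have "sc (inverse c) P \<in> pgl_proj P" using c(1) by (simp add: sc_in)
    ultimately show "C \<in> pgl_inv (pgl_proj P)" unfolding pgl_inv_def by blast
  qed
qed

lemma pgl_proj_eq:
  assumes "pgl_proj (X::'k::field^'n^'n) = pgl_proj Y"
  shows "\<exists>c. c \<noteq> 0 \<and> X = sc c Y"
proof -
  have "X \<in> pgl_proj X" unfolding mem_pgl_proj using sc_1[of X] by (metis one_neq_zero)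
  then have "X \<in> pgl_proj Y" using assms by simp
  then show ?thesis unfolding mem_pgl_proj .
qed

definition polymat :: "('k::field \<Rightarrow> 'k^'n^'n) \<Rightarrow> bool" where
  "polymat f \<longleftrightarrow> (\<exists>F :: 'n \<Rightarrow> 'n \<Rightarrow> 'k poly. \<forall>t i j. f t $ i $ j = poly (F i j) t)"

lemma polymat_left:
  assumes "polymat f" shows "polymat (\<lambda>t. P ** f t)"
proof -
  obtain F where F: "\<forall>t i j. f t $ i $ j = poly (F i j) t" using assms polymat_def by blast
  show ?thesis unfolding polymat_def
    by (rule exI[of _ "\<lambda>i j. \<Sum>k\<in>UNIV. smult (P$i$k) (F k j)"])
       (simp add: matrix_matrix_mult_def F poly_sum)
qed

lemma polymat_right:
  assumes "polymat f" shows "polymat (\<lambda>t. f t ** R)"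
proof -
  obtain F where F: "\<forall>t i j. f t $ i $ j = poly (F i j) t" using assms polymat_def by blast
  show ?thesis unfolding polymat_def
    by (rule exI[of _ "\<lambda>i j. \<Sum>k\<in>UNIV. smult (R$k$j) (F i k)"])
       (simp add: matrix_matrix_mult_def F poly_sum mult.commute)
qed

lemma polymat_det:
  assumes "polymat f" shows "\<exists>D. \<forall>t. det (f t) = poly D t"
proof -
  obtain F where F: "\<forall>t i j. f t $ i $ j = poly (F i j) t" using assms polymat_def by blast
  show ?thesis
    by (rule exI[of _ "\<Sum>p\<in>{p. p permutes (UNIV::'b set)}. smult (of_int (sign p)) (\<Prod>i\<in>UNIV. F i (p i))"])
       (simp add: det_def F poly_sum poly_prod)
qed

lemma Ga_hom_0:
  fixes \<phi> :: "'k::field \<Rightarrow> 'k^'n^'n"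
  assumes "Ga_hom_GL \<phi>" shows "\<phi> 0 = mat 1"
proof -
  have h: "\<phi> 0 = \<phi> 0 ** \<phi> 0" using assms unfolding Ga_hom_GL_def by (metis add_0)
  have i: "invertible (\<phi> 0)" using assms unfolding Ga_hom_GL_def by blast
  have "\<phi> 0 = matrix_inv (\<phi> 0) ** (\<phi> 0 ** \<phi> 0)" using minv[OF i]
    by (simp add: matrix_mul_assoc)
  also have "\<dots> = mat 1" using h minv[OF i] by simp
  finally show ?thesis .
qed

lemma Ga_hom_det:
  fixes \<phi> :: "'k::alg_closed_field \<Rightarrow> 'k^'n^'n"
  assumes "Ga_hom_GL \<phi>" shows "det (\<phi> t) = 1"
proof -
  have pm: "polymat \<phi>" using assms unfolding Ga_hom_GL_def polymat_def by blast
  obtain D where D: "\<forall>t. det (\<phi> t) = poly D t" using polymat_det[OF pm] by blast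
  have nz: "poly D x \<noteq> 0" for x
    using D assms invertible_det_nz unfolding Ga_hom_GL_def by metis
  have "degree D = 0" using nz alg_closed_imp_poly_has_root by blast
  then obtain a where "D = [:a:]" by (rule degree_eq_zeroE)
  then have "poly D t = poly D 0" by simp
  moreover have "poly D 0 = 1" using D[rule_format, of 0] Ga_hom_0[OF assms] by simp
  ultimately show ?thesis using D by simp
qed

lemma alg_closed_infinite: "infinite (UNIV :: 'k::alg_closed_field set)"
proof
  assume fin: "finite (UNIV :: 'k set)"
  define q where "q = (\<Prod>a\<in>(UNIV::'k set). [:-a, 1:])"
  have dq: "degree q = card (UNIV :: 'k set)"
    unfolding q_def by (subst degree_prod_sum_eq) auto
  have "card (UNIV :: 'k set) > 0" using fin by (simp add: card_gt_0_iff)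
  then have "degree (q + 1) > 0" using dq by (simp add: degree_add_eq_left)
  then obtain x where x: "poly (q + 1) x = 0" using alg_closed_imp_poly_has_root by blast
  have "poly q x = 0" unfolding q_def poly_prod using fin
    by (intro prod_zero) auto
  then show False using x by simp
qed

theorem lemma1p7:
  fixes \<phi>1 \<phi>2 :: "'k::alg_closed_field \<Rightarrow> 'k^'n^'n"
    and \<theta>1 \<theta>2 :: "'k \<Rightarrow> ('k^'n^'n) set"
  assumes "Ga_hom_GL \<phi>1" and "Ga_hom_GL \<phi>2"
    and "\<theta>1 = pgl_proj \<circ> \<phi>1" and "\<theta>2 = pgl_proj \<circ> \<phi>2"
  shows "(\<exists>P :: 'k^'n^'n. invertible P \<and>
            (\<forall>t. \<theta>2 t = pgl_mult (pgl_mult (pgl_proj P) (\<theta>1 t)) (pgl_inv (pgl_proj P))))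
         \<longleftrightarrow>
         (\<exists>Q :: 'k^'n^'n. invertible Q \<and>
            (\<forall>t. \<phi>2 t = Q ** \<phi>1 t ** matrix_inv Q))"
proof -
  have conj: "pgl_mult (pgl_mult (pgl_proj P) (\<theta>1 t)) (pgl_inv (pgl_proj P))
      = pgl_proj (P ** \<phi>1 t ** matrix_inv P)" if "invertible P" for P t
    using that assms(3) by (simp add: pgl_mult_proj pgl_inv_proj)
  show ?thesis
  proof
    assume "\<exists>P :: 'k^'n^'n. invertible P \<and>
            (\<forall>t. \<theta>2 t = pgl_mult (pgl_mult (pgl_proj P) (\<theta>1 t)) (pgl_inv (pgl_proj P)))"
    then obtain P where P: "invertible P"
      and h: "\<forall>t. \<theta>2 t = pgl_mult (pgl_mult (pgl_proj P) (\<theta>1 t)) (pgl_inv (pgl_proj P))"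
      by blast
    define M where "M t = P ** \<phi>1 t ** matrix_inv P" for t
    have eq: "pgl_proj (\<phi>2 t) = pgl_proj (M t)" for t
      using h[rule_format, of t] conj[OF P, of t] assms(4) by (simp add: M_def)
    have "\<exists>c. c \<noteq> 0 \<and> \<phi>2 t = sc c (M t)" for t using pgl_proj_eq[OF eq[of t]] .
    then obtain c where c: "\<And>t. c t \<noteq> 0" "\<And>t. \<phi>2 t = sc (c t) (M t)" by metis
    have detM: "det (M t) = 1" for t
    proof -
      have "det (M t) = det P * det (\<phi>1 t) * det (matrix_inv P)" by (simp add: M_def det_mul)
      also have "\<dots> = det (P ** matrix_inv P)" using Ga_hom_det[OF assms(1)] by (simp add: det_mul)
      finally show ?thesis using minv[OF P] by simp
    qed
    have cN: "c t ^ CARD('n) = 1" for t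
    proof -
      have "1 = det (\<phi>2 t)" using Ga_hom_det[OF assms(2), of t] by simp
      also have "\<dots> = c t ^ CARD('n) * det (M t)" using c(2)[of t] det_sc[of "c t" "M t"] by simp
      finally show ?thesis using detM[of t] by simp
    qed
    define R where "R = {z::'k. z ^ CARD('n) = 1}"
    have Req: "R = {z. poly (monom 1 CARD('n) - 1) z = 0}" by (simp add: R_def poly_monom)
    have nz: "monom (1::'k) CARD('n) - 1 \<noteq> 0"
    proof
      assume "monom (1::'k) CARD('n) - 1 = 0"
      then have "coeff (monom (1::'k) CARD('n) - 1) CARD('n) = 0" by simp
      then show False by simp
    qed
    have finR: "finite R" unfolding Req by (rule poly_roots_finite[OF nz])
    have U: "UNIV = (\<Union>z\<in>R. c -` {z})" using cN unfolding R_def by auto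
    have "\<exists>z\<in>R. infinite (c -` {z})"
    proof (rule ccontr)
      assume "\<not> (\<exists>z\<in>R. infinite (c -` {z}))"
      then have "finite (\<Union>z\<in>R. c -` {z})" using finR by simp
      then show False using U alg_closed_infinite by metis
    qed
    then obtain z where zR: "z \<in> R" and inf: "infinite (c -` {z})" by blast
    have pm2: "polymat \<phi>2" using assms(2) unfolding Ga_hom_GL_def polymat_def by blast
    have pm1: "polymat \<phi>1" using assms(1) unfolding Ga_hom_GL_def polymat_def by blast
    have pmM: "polymat M" unfolding M_def
      by (intro polymat_right polymat_left pm1)
    obtain F where F: "\<forall>t i j. \<phi>2 t $ i $ j = poly (F i j) t" using pm2 polymat_def by blast
    obtain G where G: "\<forall>t i j. M t $ i $ j = poly (G i j) t" using pmM polymat_def by blast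
    have FG: "F i j = smult z (G i j)" for i j
    proof (rule ccontr)
      assume "F i j \<noteq> smult z (G i j)"
      then have "F i j - smult z (G i j) \<noteq> 0" by simp
      then have "finite {t. poly (F i j - smult z (G i j)) t = 0}" by (rule poly_roots_finite)
      moreover have "c -` {z} \<subseteq> {t. poly (F i j - smult z (G i j)) t = 0}"
      proof
        fix t assume "t \<in> c -` {z}"
        then have "c t = z" by simp
        then have "\<phi>2 t $ i $ j = z * M t $ i $ j" using c(2)[of t] by (simp add: sc_def)
        then show "t \<in> {t. poly (F i j - smult z (G i j)) t = 0}" using F G by simp
      qed
      ultimately show False using inf finite_subset by blast
    qed
    have all: "\<phi>2 t = sc z (M t)" for t
      unfolding vec_eq_iff sc_def using F G FG by simp
    have "M 0 = mat 1" unfolding M_def using Ga_hom_0[OF assms(1)] minv[OF P] by simp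
    then have "mat 1 = sc z (mat 1 :: 'k^'n^'n)" using all[of 0] Ga_hom_0[OF assms(2)] by simp
    then have "(mat 1 :: 'k^'n^'n) $ (undefined::'n) $ (undefined::'n) = sc z (mat 1 :: 'k^'n^'n) $ (undefined::'n) $ (undefined::'n)"
      by (rule arg_cong[where f="\<lambda>A. A $ (undefined::'n) $ (undefined::'n)"])
    then have z1: "z = 1" by (simp add: sc_def mat_def)
    show "\<exists>Q :: 'k^'n^'n. invertible Q \<and> (\<forall>t. \<phi>2 t = Q ** \<phi>1 t ** matrix_inv Q)"
      by (intro exI[of _ P] conjI allI P) (simp add: all z1 sc_1 M_def)
  next
    assume "\<exists>Q :: 'k^'n^'n. invertible Q \<and> (\<forall>t. \<phi>2 t = Q ** \<phi>1 t ** matrix_inv Q)"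
    then obtain Q where Q: "invertible Q" "\<forall>t. \<phi>2 t = Q ** \<phi>1 t ** matrix_inv Q" by blast
    have "\<theta>2 t = pgl_mult (pgl_mult (pgl_proj Q) (\<theta>1 t)) (pgl_inv (pgl_proj Q))" for t
      using conj[OF Q(1), of t] Q(2) assms(4) by simp
    then show "\<exists>P :: 'k^'n^'n. invertible P \<and>
            (\<forall>t. \<theta>2 t = pgl_mult (pgl_mult (pgl_proj P) (\<theta>1 t)) (pgl_inv (pgl_proj P)))"
      using Q(1) by blast
  qed
qed

end
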